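(* Consider either spinless fermions or spinless bosons on the ring $[1:L]$, and let $H=\sum_{m=m_0}^{m_1}H^{(m)}=\bigoplus_{n\ge0}H_n$ be a Hamiltonian of the form described in the context. Let $n\geq m_1$ be such that $H_n\geq 0$ and $$H_{n+1}\geq \frac{1}{n+1-m_0}\sum_{j=1}^L a_j^\dagger H_n a_j .$$ Then $$\operatorname{gap}H_{n+1}\geq \frac{n+1-\Big\|P_{n+1}^\perp\sum_{j=1}^L a_j^\dagger P_n a_j P_{n+1}^\perp\Big\|}{n+1-m_0}\,\operatorname{gap}H_n .$$
   Context: Let $a_j^\dagger,a_j$ ($j\in[1:L]$) be the canonical creation and annihilation operators of spinless fermions (CAR) or bosons (CCR) on the Fock space over $\mathbb{C}^L$, and $N=\sum_{j}a_j^\dagger a_j$. The Hamiltonian is $H=\sum_{m=m_0}^{m_1}H^{(m)}$ with integers $m_0\le m_1$ and $$H^{(m)}=\sum_{1\le j_1,\dots,j_m\le L}\ \sum_{1\le k_1,\dots,k_m\le L} W^{k_1\dots k_m}_{j_1\dots j_m}\,a^\dagger_{j_1}\cdots a^\dagger_{j_m}a_{k_m}\cdots a_{k_1},$$ with coefficients $W\in\mathbb{C}$ such that each $H^{(m)}$ is self-adjoint; $H_n$ denotes the restriction of $H$ to the $n$-particle subspace. For each $n$, $P_n$ is the orthogonal projection (in the $n$-particle space) onto $\ker H_n$, $P_n^\perp=\mathbb{1}-P_n$, and $\operatorname{gap}H_n=\min\{\langle\psi,H_n\psi\rangle:\ \psi\perp\ker H_n,\ \|\psi\|=1\}$. The operator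 $\sum_j a_j^\dagger P_n a_j$ acts on the $(n+1)$-particle space, and $\|\cdot\|$ is the operator norm. *)

theory Defs
  imports "HOL-Analysis.Analysis"
begin

datatype stat = Fermi | Bose

text \<open>Occupation-number configurations on the sites [1:L]: c i = occupation of site i.
  Fock-space vectors are coefficient functions on configurations.\<close>
type_synonym cfg = "nat \<Rightarrow> nat"
type_synonym state = "cfg \<Rightarrow> complex"

definition vcfg :: "stat \<Rightarrow> nat \<Rightarrow> cfg \<Rightarrow> bool" where
  "vcfg st L c \<longleftrightarrow> (\<forall>i. c i \<noteq> 0 \<longrightarrow> i \<in> {1..L}) \<and> (st = Fermi \<longrightarrow> (\<forall>i. c i \<le> 1))"

definition cfgs :: "stat \<Rightarrow> nat \<Rightarrow> nat \<Rightarrow> cfg set" where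
  "cfgs st L n = {c. vcfg st L c \<and> (\<Sum>i\<in>{1..L}. c i) = n}"

definition insec :: "stat \<Rightarrow> nat \<Rightarrow> nat \<Rightarrow> state \<Rightarrow> bool" where
  "insec st L n \<psi> \<longleftrightarrow> (\<forall>c. \<psi> c \<noteq> 0 \<longrightarrow> c \<in> cfgs st L n)"

text \<open>Jordan--Wigner sign for fermions (ordering of sites), 1 for bosons\<close>
definition fsign :: "stat \<Rightarrow> nat \<Rightarrow> cfg \<Rightarrow> nat \<Rightarrow> complex" where
  "fsign st L c j = (if st = Fermi then (-1) ^ card {k\<in>{1..L}. k < j \<and> c k \<noteq> 0} else 1)"

definition adag :: "stat \<Rightarrow> nat \<Rightarrow> nat \<Rightarrow> state \<Rightarrow> state" where
  "adag st L j \<psi> = (\<lambda>c. if vcfg st L c \<and> 1 \<le> c j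
      then fsign st L c j * complex_of_real (sqrt (real (c j))) * \<psi> (c(j := c j - 1))
      else 0)"

definition ann :: "stat \<Rightarrow> nat \<Rightarrow> nat \<Rightarrow> state \<Rightarrow> state" where
  "ann st L j \<psi> = (\<lambda>c. if vcfg st L c \<and> vcfg st L (c(j := Suc (c j)))
      then fsign st L c j * complex_of_real (sqrt (real (Suc (c j)))) * \<psi> (c(j := Suc (c j)))
      else 0)"

definition idx_lists :: "nat \<Rightarrow> nat \<Rightarrow> nat list set" where
  "idx_lists L m = {js. set js \<subseteq> {1..L} \<and> length js = m}"

text \<open>H^(m) = sum W^{k_1..k_m}_{j_1..j_m} a^dag_{j_1}..a^dag_{j_m} a_{k_m}..a_{k_1};
  W m js ks is the coefficient with js = [j_1..j_m], ks = [k_1..k_m].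
  fold applies a_{k_1} first; foldr applies a^dag_{j_m} first.\<close>
definition Hm :: "stat \<Rightarrow> nat \<Rightarrow> (nat \<Rightarrow> nat list \<Rightarrow> nat list \<Rightarrow> complex) \<Rightarrow> nat \<Rightarrow> state \<Rightarrow> state" where
  "Hm st L W m \<psi> = (\<lambda>c. \<Sum>js\<in>idx_lists L m. \<Sum>ks\<in>idx_lists L m.
      W m js ks * foldr (adag st L) js (fold (ann st L) ks \<psi>) c)"

definition Ham :: "stat \<Rightarrow> nat \<Rightarrow> (nat \<Rightarrow> nat list \<Rightarrow> nat list \<Rightarrow> complex) \<Rightarrow> nat \<Rightarrow> nat \<Rightarrow> state \<Rightarrow> state" where
  "Ham st L W m0 m1 \<psi> = (\<lambda>c. \<Sum>m\<in>{m0..m1}. Hm st L W m \<psi> c)"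

definition inner_n :: "stat \<Rightarrow> nat \<Rightarrow> nat \<Rightarrow> state \<Rightarrow> state \<Rightarrow> complex" where
  "inner_n st L n \<phi> \<psi> = (\<Sum>c\<in>cfgs st L n. cnj (\<phi> c) * \<psi> c)"

definition norm_n :: "stat \<Rightarrow> nat \<Rightarrow> nat \<Rightarrow> state \<Rightarrow> real" where
  "norm_n st L n \<psi> = sqrt (\<Sum>c\<in>cfgs st L n. (cmod (\<psi> c))\<^sup>2)"

definition kerH :: "stat \<Rightarrow> nat \<Rightarrow> (nat \<Rightarrow> nat list \<Rightarrow> nat list \<Rightarrow> complex) \<Rightarrow> nat \<Rightarrow> nat \<Rightarrow> nat \<Rightarrow> state set" where
  "kerH st L W m0 m1 n = {\<psi>. insec st L n \<psi> \<and> (\<forall>c\<in>cfgs st L n. Ham st L W m0 m1 \<psi> c = 0)}"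

definition Pn :: "stat \<Rightarrow> nat \<Rightarrow> (nat \<Rightarrow> nat list \<Rightarrow> nat list \<Rightarrow> complex) \<Rightarrow> nat \<Rightarrow> nat \<Rightarrow> nat \<Rightarrow> state \<Rightarrow> state" where
  "Pn st L W m0 m1 n \<psi> = (THE \<phi>. \<phi> \<in> kerH st L W m0 m1 n \<and>
      (\<forall>\<eta>\<in>kerH st L W m0 m1 n. inner_n st L n \<eta> (\<lambda>c. \<psi> c - \<phi> c) = 0))"

definition Pn_perp :: "stat \<Rightarrow> nat \<Rightarrow> (nat \<Rightarrow> nat list \<Rightarrow> nat list \<Rightarrow> complex) \<Rightarrow> nat \<Rightarrow> nat \<Rightarrow> nat \<Rightarrow> state \<Rightarrow> state" where
  "Pn_perp st L W m0 m1 n \<psi> = (\<lambda>c. \<psi> c - Pn st L W m0 m1 n \<psi> c)"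

text \<open>gap H_n = min { <psi, H_n psi> : psi \<bottom> ker H_n, |psi| = 1 } (attained; written as Inf)\<close>
definition gapH :: "stat \<Rightarrow> nat \<Rightarrow> (nat \<Rightarrow> nat list \<Rightarrow> nat list \<Rightarrow> complex) \<Rightarrow> nat \<Rightarrow> nat \<Rightarrow> nat \<Rightarrow> real" where
  "gapH st L W m0 m1 n = Inf {Re (inner_n st L n \<psi> (Ham st L W m0 m1 \<psi>)) | \<psi>.
      insec st L n \<psi> \<and> (\<forall>\<eta>\<in>kerH st L W m0 m1 n. inner_n st L n \<eta> \<psi> = 0) \<and> norm_n st L n \<psi> = 1}"

definition opnorm_n :: "stat \<Rightarrow> nat \<Rightarrow> nat \<Rightarrow> (state \<Rightarrow> state) \<Rightarrow> real" where
  "opnorm_n st L n T = Sup {norm_n st L n (T \<psi>) | \<psi>. insec st L n \<psi> \<and> norm_n st L n \<psi> \<le> 1}"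

end

theory Submission
  imports Defs
begin



lemma finite_cfgs: "finite (cfgs st L k)"
proof -
  have "cfgs st L k \<subseteq> {f. \<forall>x. (x \<in> {1..L} \<longrightarrow> f x \<in> {0..k}) \<and> (x \<notin> {1..L} \<longrightarrow> f x = 0)}"
  proof
    fix c assume c: "c \<in> cfgs st L k"
    hence v: "vcfg st L c" and s: "(\<Sum>i\<in>{1..L}. c i) = k" by (auto simp: cfgs_def)
    have "c x \<le> k" if "x \<in> {1..L}" for x
      using s member_le_sum[of x "{1..L}" c] that by auto
    moreover have "c x = 0" if "x \<notin> {1..L}" for x using v that unfolding vcfg_def by auto
    ultimately show "c \<in> {f. \<forall>x. (x \<in> {1..L} \<longrightarrow> f x \<in> {0..k}) \<and> (x \<notin> {1..L} \<longrightarrow> f x = 0)}" by auto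
  qed
  thus ?thesis using finite_set_of_finite_funs[of "{1..L}" "{0..k}" 0] finite_subset by blast
qed

lemma fsign_upd: "fsign st L (c(j := v)) j = fsign st L c j"
proof -
  have "{k\<in>{1..L}. k < j \<and> (c(j := v)) k \<noteq> 0} = {k\<in>{1..L}. k < j \<and> c k \<noteq> 0}" by auto
  thus ?thesis unfolding fsign_def by simp
qed

lemma fsign_cnj: "cnj (fsign st L c j) = fsign st L c j"
  unfolding fsign_def by simp

lemma fsign_sq: "fsign st L c j * fsign st L c j = 1"
  unfolding fsign_def by (simp add: power_mult_distrib[symmetric])

lemma vcfg_dec: "vcfg st L c \<Longrightarrow> vcfg st L (c(j := c j - 1))"
  unfolding vcfg_def by auto

lemma vcfg_j: "vcfg st L c \<Longrightarrow> 1 \<le> c j \<Longrightarrow> j \<in> {1..L}"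
  unfolding vcfg_def by (metis not_one_le_zero)

lemma sum_upd: "j \<in> A \<Longrightarrow> finite A \<Longrightarrow> (\<Sum>i\<in>A. (c(j := v)) i) + c j = (\<Sum>i\<in>A. c i) + (v::nat)"
proof -
  assume a: "j \<in> A" "finite A"
  have "(\<Sum>i\<in>A. (c(j := v)) i) = v + (\<Sum>i\<in>A-{j}. c i)"
    using a by (simp add: sum.remove)
  moreover have "(\<Sum>i\<in>A. c i) = c j + (\<Sum>i\<in>A-{j}. c i)"
    using a by (simp add: sum.remove)
  ultimately show ?thesis by simp
qed



lemma t1: assumes v: "vcfg st L (d(j := Suc (d j)))" and s: "(\<Sum>i\<in>{1..L}. d i) = k"
  shows "d(j := Suc (d j)) \<in> cfgs st L (Suc k)"
proof -
  have jj: "j \<in> {1..L}" by (rule vcfg_j[OF v]) simp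
  have "(\<Sum>i\<in>{1..L}. (d(j := Suc (d j))) i) = Suc k" using sum_upd[OF jj, of d "Suc (d j)"] s by simp
  thus ?thesis unfolding cfgs_def using v by simp
qed

lemma t2: assumes c: "c \<in> cfgs st L (Suc k)" and v: "1 \<le> c j"
  shows "c(j := c j - 1) \<in> cfgs st L k"
proof -
  have v1: "vcfg st L c" and s: "(\<Sum>i\<in>{1..L}. c i) = Suc k" using c unfolding cfgs_def by auto
  have jj: "j \<in> {1..L}" by (rule vcfg_j[OF v1 v])
  have "(\<Sum>i\<in>{1..L}. (c(j := c j - 1)) i) = k" using sum_upd[OF jj, of c "c j - 1"] s v by simp
  thus ?thesis unfolding cfgs_def using vcfg_dec[OF v1] by simp
qed

lemma upd_back: "1 \<le> c j \<Longrightarrow> (c(j := c j - 1))(j := Suc ((c(j := c j - 1)) j)) = c"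
  by auto

lemma step2: "(\<Sum>c\<in>{c\<in>cfgs st L (Suc k). 1 \<le> c j}. cnj (x c) * (fsign st L c j * complex_of_real (sqrt (real (c j))) * y (c(j := c j - 1))))
  = (\<Sum>d\<in>{d\<in>cfgs st L k. vcfg st L (d(j := Suc (d j)))}. cnj (fsign st L d j * complex_of_real (sqrt (real (Suc (d j)))) * x (d(j := Suc (d j)))) * y d)"
proof (rule sum.reindex_bij_witness[where i = "\<lambda>d. d(j := Suc (d j))" and j = "\<lambda>c. c(j := c j - 1)"])
    fix c assume "c \<in> {c\<in>cfgs st L (Suc k). 1 \<le> c j}"
    thus "(c(j := c j - 1))(j := Suc ((c(j := c j - 1)) j)) = c" by (intro upd_back) simp
  next
    fix c assume "c \<in> {c\<in>cfgs st L (Suc k). 1 \<le> c j}"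
    hence c1: "c \<in> cfgs st L (Suc k)" and v2: "1 \<le> c j" by simp_all
    have m: "c(j := c j - 1) \<in> cfgs st L k" by (rule t2[OF c1 v2])
    have v: "vcfg st L c" using c1 unfolding cfgs_def by simp
    have "vcfg st L ((c(j := c j - 1))(j := Suc ((c(j := c j - 1)) j)))" by (subst upd_back[of c j, OF v2]) (rule v)
    thus "c(j := c j - 1) \<in> {d\<in>cfgs st L k. vcfg st L (d(j := Suc (d j)))}" using m by blast
  next
    fix d assume "d \<in> {d\<in>cfgs st L k. vcfg st L (d(j := Suc (d j)))}" 
    thus "(d(j := Suc (d j)))(j := (d(j := Suc (d j))) j - 1) = d" by simp
  next
    fix d assume d: "d \<in> {d\<in>cfgs st L k. vcfg st L (d(j := Suc (d j)))}" 
    hence v: "vcfg st L (d(j := Suc (d j)))" and s: "(\<Sum>i\<in>{1..L}. d i) = k" unfolding cfgs_def by auto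
    show "d(j := Suc (d j)) \<in> {c\<in>cfgs st L (Suc k). 1 \<le> c j}" using t1[OF v s] by simp
  next
    fix c assume c: "c \<in> {c\<in>cfgs st L (Suc k). 1 \<le> c j}"
    hence v: "1 \<le> c j" by auto
    hence e: "Suc (c j - 1) = c j" by auto
    have e2: "c(j := c j) = c" by simp
    show "cnj (fsign st L (c(j := c j - 1)) j * complex_of_real (sqrt (real (Suc ((c(j := c j - 1)) j)))) * x ((c(j := c j - 1))(j := Suc ((c(j := c j - 1)) j)))) * y (c(j := c j - 1)) =
       cnj (x c) * (fsign st L c j * complex_of_real (sqrt (real (c j))) * y (c(j := c j - 1)))"
      by (simp only: fun_upd_upd fun_upd_same e e2 fsign_upd complex_cnj_mult fsign_cnj complex_cnj_complex_of_real mult_ac)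
qed



lemma step1: "inner_n st L (Suc k) x (adag st L j y) =
      (\<Sum>c\<in>{c\<in>cfgs st L (Suc k). 1 \<le> c j}. cnj (x c) * (fsign st L c j * complex_of_real (sqrt (real (c j))) * y (c(j := c j - 1))))"
  unfolding inner_n_def 
proof (rule sum.mono_neutral_cong_right[OF finite_cfgs])
  show "{c \<in> cfgs st L (Suc k). 1 \<le> c j} \<subseteq> cfgs st L (Suc k)" by blast
  show "\<forall>i\<in>cfgs st L (Suc k) - {c \<in> cfgs st L (Suc k). 1 \<le> c j}. cnj (x i) * adag st L j y i = 0"
    unfolding adag_def by auto
  show "\<And>c. c \<in> {c \<in> cfgs st L (Suc k). 1 \<le> c j} \<Longrightarrow> cnj (x c) * adag st L j y c = cnj (x c) * (fsign st L c j * complex_of_real (sqrt (real (c j))) * y (c(j := c j - 1)))"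
    unfolding adag_def cfgs_def by auto
qed



lemma step3: "(\<Sum>d\<in>{d\<in>cfgs st L k. vcfg st L (d(j := Suc (d j)))}. cnj (fsign st L d j * complex_of_real (sqrt (real (Suc (d j)))) * x (d(j := Suc (d j)))) * y d)
   = inner_n st L k (ann st L j x) y"
  unfolding inner_n_def
proof (rule sum.mono_neutral_cong_left[OF finite_cfgs])
  show "{d\<in>cfgs st L k. vcfg st L (d(j := Suc (d j)))} \<subseteq> cfgs st L k" by blast
  show "\<forall>i\<in>cfgs st L k - {d \<in> cfgs st L k. vcfg st L (d(j := Suc (d j)))}. cnj (ann st L j x i) * y i = 0"
    unfolding ann_def by auto
  show "\<And>d. d \<in> {d \<in> cfgs st L k. vcfg st L (d(j := Suc (d j)))} \<Longrightarrow> cnj (fsign st L d j * complex_of_real (sqrt (real (Suc (d j)))) * x (d(j := Suc (d j)))) * y d = cnj (ann st L j x d) * y d"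
    unfolding ann_def cfgs_def by auto
qed


lemma adj: "inner_n st L (Suc k) x (adag st L j y) = inner_n st L k (ann st L j x) y"
  using step1 step2 step3 by metis




definition lin :: "(state \<Rightarrow> state) \<Rightarrow> bool" where
  "lin T \<longleftrightarrow> (\<forall>x y. T (\<lambda>c. x c + y c) = (\<lambda>c. T x c + T y c)) \<and> (\<forall>a x. T (\<lambda>c. a * x c) = (\<lambda>c. a * T x c))"

lemma linD: "lin T \<Longrightarrow> T (\<lambda>c. x c + y c) = (\<lambda>c. T x c + T y c)"
  "lin T \<Longrightarrow> T (\<lambda>c. a * x c) = (\<lambda>c. a * T x c)"
  unfolding lin_def by blast+

lemma lin_zero: "lin T \<Longrightarrow> T (\<lambda>c. 0) = (\<lambda>c. 0)"
  using linD(2)[of T 0 "\<lambda>c. 0"] by simp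

lemma lin_diff: assumes "lin T" shows "T (\<lambda>c. x c - y c) = (\<lambda>c. T x c - T y c)"
proof -
  have "T (\<lambda>c. x c - y c) = T (\<lambda>c. x c + (\<lambda>c. (-1) * y c) c)" by simp
  also have "\<dots> = (\<lambda>c. T x c + T (\<lambda>c. (-1) * y c) c)" by (rule linD(1)[OF assms])
  also have "\<dots> = (\<lambda>c. T x c - T y c)" using linD(2)[OF assms, of "-1" y] by simp
  finally show ?thesis .
qed

lemma lin_ann: "lin (ann st L j)"
  unfolding lin_def ann_def by (auto simp: fun_eq_iff algebra_simps)

lemma lin_adag: "lin (adag st L j)"
  unfolding lin_def adag_def by (auto simp: fun_eq_iff algebra_simps)

lemma lin_comp: "lin T \<Longrightarrow> lin S \<Longrightarrow> lin (\<lambda>\<psi>. T (S \<psi>))"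
  unfolding lin_def by simp

lemma lin_id: "lin (\<lambda>\<psi>. \<psi>)"
  unfolding lin_def by simp

lemma lin_fold: "(\<And>j. lin (f j)) \<Longrightarrow> lin (fold f ks)"
proof (induction ks)
  case Nil then show ?case using lin_id by (simp add: id_def)
next
  case (Cons k ks)
  have "lin (\<lambda>\<psi>. fold f ks (f k \<psi>))" by (rule lin_comp[OF Cons.IH Cons.prems]) (use Cons.prems in auto)
  thus ?case by (simp add: comp_def)
qed

lemma lin_foldr: "(\<And>j. lin (f j)) \<Longrightarrow> lin (foldr f ks)"
proof (induction ks)
  case Nil then show ?case using lin_id by (simp add: id_def)
next
  case (Cons k ks)
  have "lin (\<lambda>\<psi>. f k (foldr f ks \<psi>))" by (rule lin_comp[OF Cons.prems Cons.IH]) (use Cons.prems in auto)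
  thus ?case by (simp add: comp_def)
qed

lemma lin_sum: assumes "\<And>i. i \<in> I \<Longrightarrow> lin (T i)" shows "lin (\<lambda>\<psi> c. \<Sum>i\<in>I. T i \<psi> c)"
  unfolding lin_def
proof (intro conjI allI)
  fix x y :: state
  show "(\<lambda>c. \<Sum>i\<in>I. T i (\<lambda>c. x c + y c) c) = (\<lambda>c. (\<Sum>i\<in>I. T i x c) + (\<Sum>i\<in>I. T i y c))"
    using linD(1)[OF assms] by (simp add: sum.distrib[symmetric])
next
  fix a and x :: state
  show "(\<lambda>c. \<Sum>i\<in>I. T i (\<lambda>c. a * x c) c) = (\<lambda>c. a * (\<Sum>i\<in>I. T i x c))"
    using linD(2)[OF assms] by (simp add: sum_distrib_left)
qed

lemma lin_scal: "lin T \<Longrightarrow> lin (\<lambda>\<psi> c. a * T \<psi> c)"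
  unfolding lin_def by (simp add: algebra_simps)

lemma lin_Hm: "lin (Hm st L W m)"
proof -
  have l: "lin (\<lambda>\<psi>. foldr (adag st L) js (fold (ann st L) ks \<psi>))" for js ks
    by (rule lin_comp[OF lin_foldr lin_fold]) (auto intro: lin_adag lin_ann)
  have "lin (\<lambda>\<psi> c. \<Sum>js\<in>idx_lists L m. (\<lambda>\<psi> c. \<Sum>ks\<in>idx_lists L m. W m js ks * foldr (adag st L) js (fold (ann st L) ks \<psi>) c) \<psi> c)"
    by (intro lin_sum lin_scal l)
  thus ?thesis unfolding Hm_def by simp
qed

lemma lin_Ham: "lin (Ham st L W m0 m1)"
proof -
  have "lin (\<lambda>\<psi> c. \<Sum>m\<in>{m0..m1}. Hm st L W m \<psi> c)" by (intro lin_sum lin_Hm)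
  thus ?thesis unfolding Ham_def by simp
qed

lemma insec_add: "insec st L k x \<Longrightarrow> insec st L k y \<Longrightarrow> insec st L k (\<lambda>c. x c + y c)"
  unfolding insec_def proof (intro allI impI) fix c assume "\<forall>c. x c \<noteq> 0 \<longrightarrow> c \<in> cfgs st L k" "\<forall>c. y c \<noteq> 0 \<longrightarrow> c \<in> cfgs st L k" "x c + y c \<noteq> 0" thus "c \<in> cfgs st L k" by (cases "x c = 0") auto qed
lemma insec_diff: "insec st L k x \<Longrightarrow> insec st L k y \<Longrightarrow> insec st L k (\<lambda>c. x c - y c)"
  unfolding insec_def proof (intro allI impI) fix c assume "\<forall>c. x c \<noteq> 0 \<longrightarrow> c \<in> cfgs st L k" "\<forall>c. y c \<noteq> 0 \<longrightarrow> c \<in> cfgs st L k" "x c - y c \<noteq> 0" thus "c \<in> cfgs st L k" by (cases "x c = 0") auto qed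
lemma insec_scal: "insec st L k x \<Longrightarrow> insec st L k (\<lambda>c. a * x c)"
  unfolding insec_def by auto
lemma insec_zero: "insec st L k (\<lambda>c. 0)"
  unfolding insec_def by auto

lemma insec_ann: assumes "insec st L (Suc k) \<psi>" shows "insec st L k (ann st L j \<psi>)"
  unfolding insec_def
proof (intro allI impI)
  fix c assume "ann st L j \<psi> c \<noteq> 0"
  hence v: "vcfg st L c" "vcfg st L (c(j := Suc (c j)))" and nz: "\<psi> (c(j := Suc (c j))) \<noteq> 0"
    unfolding ann_def by (auto split: if_splits)
  have m: "c(j := Suc (c j)) \<in> cfgs st L (Suc k)" using nz assms unfolding insec_def by blast
  have jj: "j \<in> {1..L}" by (rule vcfg_j[OF v(2)]) simp
  have "(\<Sum>i\<in>{1..L}. (c(j := Suc (c j))) i) = Suc k" using m unfolding cfgs_def by simp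
  hence "(\<Sum>i\<in>{1..L}. c i) = k" using sum_upd[OF jj, of c "Suc (c j)"] by simp
  thus "c \<in> cfgs st L k" unfolding cfgs_def using v by simp
qed

lemma inner_add_right: "inner_n st L k x (\<lambda>c. y c + z c) = inner_n st L k x y + inner_n st L k x z"
  unfolding inner_n_def by (simp add: algebra_simps sum.distrib)
lemma inner_diff_right: "inner_n st L k x (\<lambda>c. y c - z c) = inner_n st L k x y - inner_n st L k x z"
  unfolding inner_n_def by (simp add: algebra_simps sum_subtractf)
lemma inner_scal_right: "inner_n st L k x (\<lambda>c. a * y c) = a * inner_n st L k x y"
  unfolding inner_n_def by (simp add: algebra_simps sum_distrib_left)
lemma inner_add_left: "inner_n st L k (\<lambda>c. y c + z c) x = inner_n st L k y x + inner_n st L k z x"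
  unfolding inner_n_def by (simp add: algebra_simps sum.distrib)
lemma inner_diff_left: "inner_n st L k (\<lambda>c. y c - z c) x = inner_n st L k y x - inner_n st L k z x"
  unfolding inner_n_def by (simp add: algebra_simps sum_subtractf)
lemma inner_scal_left: "inner_n st L k (\<lambda>c. a * y c) x = cnj a * inner_n st L k y x"
  unfolding inner_n_def by (simp add: algebra_simps sum_distrib_left)
lemma inner_sum_right: "inner_n st L k x (\<lambda>c. \<Sum>j\<in>J. f j c) = (\<Sum>j\<in>J. inner_n st L k x (f j))"
  unfolding inner_n_def by (simp add: sum_distrib_left sum.swap[of _ J])
lemma inner_cnj: "inner_n st L k y x = cnj (inner_n st L k x y)"
  unfolding inner_n_def by (simp add: mult.commute)
lemma inner_zero_right: "inner_n st L k x (\<lambda>c. 0) = 0"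
  unfolding inner_n_def by simp
lemma inner_zero_left: "inner_n st L k (\<lambda>c. 0) x = 0"
  unfolding inner_n_def by simp

lemma norm_sq: "(norm_n st L k x)\<^sup>2 = (\<Sum>c\<in>cfgs st L k. (cmod (x c))\<^sup>2)"
  unfolding norm_n_def by (intro real_sqrt_pow2 sum_nonneg) simp

lemma inner_self: "inner_n st L k x x = complex_of_real ((norm_n st L k x)\<^sup>2)"
proof -
  have "inner_n st L k x x = (\<Sum>c\<in>cfgs st L k. complex_of_real ((cmod (x c))\<^sup>2))"
    unfolding inner_n_def
  proof (intro sum.cong refl)
    fix c
    have "complex_of_real ((cmod (x c))\<^sup>2) = x c * cnj (x c)" by (rule complex_norm_square)
    thus "cnj (x c) * x c = complex_of_real ((cmod (x c))\<^sup>2)" by (simp only: mult.commute)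
  qed
  also have "\<dots> = complex_of_real (\<Sum>c\<in>cfgs st L k. (cmod (x c))\<^sup>2)" by simp
  finally show ?thesis using norm_sq[of st L k x] by simp
qed

lemma norm_nonneg: "0 \<le> norm_n st L k x"
  unfolding norm_n_def by (intro real_sqrt_ge_zero sum_nonneg) simp

lemma norm_zero_insec: assumes "insec st L k x" "norm_n st L k x = 0" shows "x = (\<lambda>c. 0)"
proof
  fix c
  have "(\<Sum>c\<in>cfgs st L k. (cmod (x c))\<^sup>2) = 0" using assms(2) norm_sq[of st L k x] by simp
  hence "\<forall>c\<in>cfgs st L k. (cmod (x c))\<^sup>2 = 0" using finite_cfgs by (simp add: sum_nonneg_eq_0_iff)
  thus "x c = 0" using assms(1) unfolding insec_def by auto
qed

lemma inner_self_zero: "insec st L k x \<Longrightarrow> inner_n st L k x x = 0 \<Longrightarrow> x = (\<lambda>c. 0)"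
proof -
  assume a: "insec st L k x" "inner_n st L k x x = 0"
  hence "(norm_n st L k x)\<^sup>2 = 0" using inner_self[of st L k x] by simp
  hence "norm_n st L k x = 0" by simp
  thus ?thesis using norm_zero_insec a by blast
qed

lemma norm_scal: "norm_n st L k (\<lambda>c. a * x c) = cmod a * norm_n st L k x"
  unfolding norm_n_def by (simp add: norm_mult power_mult_distrib sum_distrib_left[symmetric] real_sqrt_mult)

lemma num_pt: assumes "c \<in> cfgs st L (Suc k)" shows "adag st L j (ann st L j \<psi>) c = of_nat (c j) * \<psi> c"
proof (cases "1 \<le> c j")
  case True
  have v: "vcfg st L c" using assms unfolding cfgs_def by simp
  have e: "(c(j := c j - 1))(j := Suc ((c(j := c j - 1)) j)) = c" using True by auto
  have v2: "vcfg st L (c(j := c j - 1))" using vcfg_dec[OF v] .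
  have "ann st L j \<psi> (c(j := c j - 1)) = fsign st L c j * complex_of_real (sqrt (real (c j))) * \<psi> c"
    unfolding ann_def using e v v2 True by (simp add: fsign_upd)
  hence "adag st L j (ann st L j \<psi>) c = (fsign st L c j * fsign st L c j) * (complex_of_real (sqrt (real (c j))) * complex_of_real (sqrt (real (c j)))) * \<psi> c"
    unfolding adag_def using v True by (simp add: algebra_simps)
  also have "\<dots> = of_nat (c j) * \<psi> c" unfolding fsign_sq of_real_mult[symmetric] by simp
  finally show ?thesis .
next
  case False thus ?thesis unfolding adag_def by simp
qed

lemma num_sum: assumes "insec st L (Suc k) \<psi>"
  shows "(\<Sum>j\<in>{1..L}. inner_n st L k (ann st L j \<psi>) (ann st L j \<psi>)) = of_nat (Suc k) * inner_n st L (Suc k) \<psi> \<psi>"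
proof -
  have "(\<Sum>j\<in>{1..L}. inner_n st L k (ann st L j \<psi>) (ann st L j \<psi>)) = (\<Sum>j\<in>{1..L}. inner_n st L (Suc k) \<psi> (adag st L j (ann st L j \<psi>)))"
    by (simp add: adj)
  also have "\<dots> = (\<Sum>j\<in>{1..L}. \<Sum>c\<in>cfgs st L (Suc k). cnj (\<psi> c) * (of_nat (c j) * \<psi> c))"
    unfolding inner_n_def by (intro sum.cong refl) (simp add: num_pt)
  also have "\<dots> = (\<Sum>c\<in>cfgs st L (Suc k). cnj (\<psi> c) * \<psi> c * of_nat (\<Sum>j\<in>{1..L}. c j))"
    by (subst sum.swap) (simp add: sum_distrib_left algebra_simps)
  also have "\<dots> = (\<Sum>c\<in>cfgs st L (Suc k). cnj (\<psi> c) * \<psi> c * of_nat (Suc k))"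
    by (intro sum.cong refl) (simp add: cfgs_def)
  also have "\<dots> = of_nat (Suc k) * inner_n st L (Suc k) \<psi> \<psi>"
    unfolding inner_n_def by (simp add: sum_distrib_left algebra_simps)
  finally show ?thesis .
qed




lemma proj_ex:
  assumes "finite T"
  shows "\<And>K \<psi>. T \<subseteq> cfgs st L k \<Longrightarrow> (\<lambda>c. 0) \<in> K \<Longrightarrow> (\<forall>x\<in>K. \<forall>y\<in>K. (\<lambda>c. x c + y c) \<in> K) \<Longrightarrow>
     (\<forall>a. \<forall>x\<in>K. (\<lambda>c. a * x c) \<in> K) \<Longrightarrow> (\<forall>x\<in>K. \<forall>c. x c \<noteq> 0 \<longrightarrow> c \<in> T) \<Longrightarrow>
     \<exists>\<phi>\<in>K. \<forall>\<eta>\<in>K. inner_n st L k \<eta> (\<lambda>c. \<psi> c - \<phi> c) = 0"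
  using assms
proof (induction T rule: finite_induct)
  case empty
  have "\<forall>x\<in>K. x = (\<lambda>c. 0)" using empty.prems(5) by (auto simp: fun_eq_iff)
  show ?case
  proof (rule bexI[where x="\<lambda>c. 0"])
    show "\<forall>\<eta>\<in>K. inner_n st L k \<eta> (\<lambda>c. \<psi> c - 0) = 0"
    proof
      fix \<eta> assume "\<eta> \<in> K" hence "\<eta> = (\<lambda>c. 0)" using \<open>\<forall>x\<in>K. x = (\<lambda>c. 0)\<close> by blast
      thus "inner_n st L k \<eta> (\<lambda>c. \<psi> c - 0) = 0" by (simp add: inner_zero_left)
    qed
  qed (rule empty.prems(2))
next
  case (insert t T)
  define K' where "K' = {x\<in>K. x t = 0}"
  have IH: "\<exists>\<phi>\<in>K'. \<forall>\<eta>\<in>K'. inner_n st L k \<eta> (\<lambda>c. z c - \<phi> c) = 0" for z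
  proof (rule insert.IH)
    show "T \<subseteq> cfgs st L k" using insert.prems by auto
    show "(\<lambda>c. 0) \<in> K'" using insert.prems unfolding K'_def by auto
    show "\<forall>x\<in>K'. \<forall>y\<in>K'. (\<lambda>c. x c + y c) \<in> K'" using insert.prems(3) unfolding K'_def by auto
    show "\<forall>a. \<forall>x\<in>K'. (\<lambda>c. a * x c) \<in> K'" using insert.prems(4) unfolding K'_def by auto
    show "\<forall>x\<in>K'. \<forall>c. x c \<noteq> 0 \<longrightarrow> c \<in> T" using insert.prems(5) unfolding K'_def by fastforce
  qed
  show ?case
  proof (cases "\<forall>x\<in>K. x t = 0")
    case True
    hence "K' = K" unfolding K'_def by auto
    thus ?thesis using IH by simp
  next
    case False
    then obtain x0 where x0: "x0 \<in> K" "x0 t \<noteq> 0" by auto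
    obtain \<phi>0 where p0: "\<phi>0 \<in> K'" "\<forall>\<eta>\<in>K'. inner_n st L k \<eta> (\<lambda>c. x0 c - \<phi>0 c) = 0" using IH by blast
    obtain \<phi>1 where p1: "\<phi>1 \<in> K'" "\<forall>\<eta>\<in>K'. inner_n st L k \<eta> (\<lambda>c. \<psi> c - \<phi>1 c) = 0" using IH by blast
    define w where "w = (\<lambda>c. x0 c - \<phi>0 c)"
    have Kdiff: "(\<lambda>c. x c - y c) \<in> K" if "x \<in> K" "y \<in> K" for x y
    proof -
      have "(\<lambda>c. (-1) * y c) \<in> K" using insert.prems(4) that(2) by blast
      from insert.prems(3)[rule_format, OF that(1) this] have "(\<lambda>c. x c + (-1) * y c) \<in> K" .
      thus ?thesis by simp
    qed
    have p0K: "\<phi>0 \<in> K" "\<phi>0 t = 0" using p0 unfolding K'_def by auto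
    have p1K: "\<phi>1 \<in> K" "\<phi>1 t = 0" using p1 unfolding K'_def by auto
    have wK: "w \<in> K" unfolding w_def using Kdiff x0 p0K by blast
    have wt: "w t \<noteq> 0" unfolding w_def using x0 p0K by simp
    have tB: "t \<in> cfgs st L k" using insert.prems(1) by auto
    have "0 < (cmod (w t))\<^sup>2" using wt by simp
    also have "\<dots> \<le> (\<Sum>c\<in>cfgs st L k. (cmod (w c))\<^sup>2)" by (rule member_le_sum[OF tB]) (auto simp: finite_cfgs)
    also have "\<dots> = (norm_n st L k w)\<^sup>2" by (simp add: norm_sq)
    finally have ww: "inner_n st L k w w \<noteq> 0" using inner_self[of st L k w] by simp
    have ow: "\<forall>\<eta>\<in>K'. inner_n st L k \<eta> w = 0" using p0 unfolding w_def by blast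
    define a where "a = inner_n st L k w \<psi> / inner_n st L k w w"
    define \<phi> where "\<phi> = (\<lambda>c. \<phi>1 c + a * w c)"
    have "(\<lambda>c. a * w c) \<in> K" using insert.prems(4) wK by blast
    from insert.prems(3)[rule_format, OF p1K(1) this] have "(\<lambda>c. \<phi>1 c + a * w c) \<in> K" .
    hence phiK: "\<phi> \<in> K" unfolding \<phi>_def by simp
    have "\<forall>\<eta>\<in>K. inner_n st L k \<eta> (\<lambda>c. \<psi> c - \<phi> c) = 0"
    proof
      fix \<eta> assume eK: "\<eta> \<in> K"
      define \<beta> where "\<beta> = \<eta> t / w t"
      define \<eta>' where "\<eta>' = (\<lambda>c. \<eta> c - \<beta> * w c)"
      have "(\<lambda>c. \<beta> * w c) \<in> K" using insert.prems(4) wK by blast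
      hence "\<eta>' \<in> K" unfolding \<eta>'_def using Kdiff eK by blast
      moreover have "\<eta>' t = 0" unfolding \<eta>'_def \<beta>_def using wt by simp
      ultimately have e'K: "\<eta>' \<in> K'" unfolding K'_def by simp
      have eta: "\<eta> = (\<lambda>c. \<eta>' c + \<beta> * w c)" unfolding \<eta>'_def by simp
      have r: "(\<lambda>c. \<psi> c - \<phi> c) = (\<lambda>c. (\<psi> c - \<phi>1 c) - a * w c)" unfolding \<phi>_def by (simp add: algebra_simps)
      have i1: "inner_n st L k \<eta>' (\<lambda>c. \<psi> c - \<phi>1 c) = 0" using p1 e'K by blast
      have i2: "inner_n st L k \<eta>' w = 0" using ow e'K by blast
      have i3: "inner_n st L k w \<phi>1 = 0" using ow p1 inner_cnj by (metis complex_cnj_zero)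
      have "inner_n st L k \<eta> (\<lambda>c. \<psi> c - \<phi> c) =
          inner_n st L k \<eta>' (\<lambda>c. \<psi> c - \<phi>1 c) - a * inner_n st L k \<eta>' w
          + cnj \<beta> * (inner_n st L k w \<psi> - inner_n st L k w \<phi>1 - a * inner_n st L k w w)"
        unfolding r eta inner_add_left inner_scal_left inner_diff_right inner_scal_right ..
      also have "\<dots> = 0" using i1 i2 i3 ww unfolding a_def by simp
      finally show "inner_n st L k \<eta> (\<lambda>c. \<psi> c - \<phi> c) = 0" .
    qed
    thus ?thesis using phiK by blast
  qed
qed

lemma ker_zero: "(\<lambda>c. 0) \<in> kerH st L W m0 m1 k"
  unfolding kerH_def using lin_zero[OF lin_Ham] insec_zero by simp
lemma ker_add: "x \<in> kerH st L W m0 m1 k \<Longrightarrow> y \<in> kerH st L W m0 m1 k \<Longrightarrow> (\<lambda>c. x c + y c) \<in> kerH st L W m0 m1 k"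
  unfolding kerH_def using linD(1)[OF lin_Ham] insec_add by simp
lemma ker_scal: "x \<in> kerH st L W m0 m1 k \<Longrightarrow> (\<lambda>c. a * x c) \<in> kerH st L W m0 m1 k"
  unfolding kerH_def using linD(2)[OF lin_Ham] insec_scal by simp
lemma ker_diff: "x \<in> kerH st L W m0 m1 k \<Longrightarrow> y \<in> kerH st L W m0 m1 k \<Longrightarrow> (\<lambda>c. x c - y c) \<in> kerH st L W m0 m1 k"
  unfolding kerH_def using lin_diff[OF lin_Ham] insec_diff by simp
lemma ker_insec: "x \<in> kerH st L W m0 m1 k \<Longrightarrow> insec st L k x"
  unfolding kerH_def by simp

lemma Pn_ex: "\<exists>\<phi>\<in>kerH st L W m0 m1 k. \<forall>\<eta>\<in>kerH st L W m0 m1 k. inner_n st L k \<eta> (\<lambda>c. \<psi> c - \<phi> c) = 0"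
  by (rule proj_ex[OF finite_cfgs order_refl])
     (auto intro: ker_zero ker_add ker_scal dest: ker_insec simp: insec_def)

lemma Pn_uniq:
  assumes "\<phi>1 \<in> kerH st L W m0 m1 k" "\<forall>\<eta>\<in>kerH st L W m0 m1 k. inner_n st L k \<eta> (\<lambda>c. \<psi> c - \<phi>1 c) = 0"
    "\<phi>2 \<in> kerH st L W m0 m1 k" "\<forall>\<eta>\<in>kerH st L W m0 m1 k. inner_n st L k \<eta> (\<lambda>c. \<psi> c - \<phi>2 c) = 0"
  shows "\<phi>1 = \<phi>2"
proof -
  define d where "d = (\<lambda>c. \<phi>1 c - \<phi>2 c)"
  have dK: "d \<in> kerH st L W m0 m1 k" unfolding d_def using ker_diff assms by blast
  have "inner_n st L k d (\<lambda>c. (\<psi> c - \<phi>2 c) - (\<psi> c - \<phi>1 c)) = inner_n st L k d (\<lambda>c. \<psi> c - \<phi>2 c) - inner_n st L k d (\<lambda>c. \<psi> c - \<phi>1 c)"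
    by (rule inner_diff_right)
  also have "\<dots> = 0" using assms dK by simp
  finally have "inner_n st L k d (\<lambda>c. (\<psi> c - \<phi>2 c) - (\<psi> c - \<phi>1 c)) = 0" .
  moreover have "(\<lambda>c. (\<psi> c - \<phi>2 c) - (\<psi> c - \<phi>1 c)) = d" unfolding d_def by simp
  ultimately have "inner_n st L k d d = 0" by simp
  hence "d = (\<lambda>c. 0)" using inner_self_zero ker_insec[OF dK] by blast
  thus ?thesis unfolding d_def by (simp add: fun_eq_iff)
qed

lemma Pn_spec: "Pn st L W m0 m1 k \<psi> \<in> kerH st L W m0 m1 k \<and>
   (\<forall>\<eta>\<in>kerH st L W m0 m1 k. inner_n st L k \<eta> (\<lambda>c. \<psi> c - Pn st L W m0 m1 k \<psi> c) = 0)"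
proof -
  have ex1: "\<exists>!\<phi>. \<phi> \<in> kerH st L W m0 m1 k \<and> (\<forall>\<eta>\<in>kerH st L W m0 m1 k. inner_n st L k \<eta> (\<lambda>c. \<psi> c - \<phi> c) = 0)"
  proof (rule ex_ex1I)
    show "\<exists>\<phi>. \<phi> \<in> kerH st L W m0 m1 k \<and> (\<forall>\<eta>\<in>kerH st L W m0 m1 k. inner_n st L k \<eta> (\<lambda>c. \<psi> c - \<phi> c) = 0)"
      using Pn_ex by blast
  next
    fix x y assume "x \<in> kerH st L W m0 m1 k \<and> (\<forall>\<eta>\<in>kerH st L W m0 m1 k. inner_n st L k \<eta> (\<lambda>c. \<psi> c - x c) = 0)"
       "y \<in> kerH st L W m0 m1 k \<and> (\<forall>\<eta>\<in>kerH st L W m0 m1 k. inner_n st L k \<eta> (\<lambda>c. \<psi> c - y c) = 0)"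
    thus "x = y" using Pn_uniq by blast
  qed
  show ?thesis unfolding Pn_def by (rule theI'[OF ex1])
qed

lemma Pn_ker: "Pn st L W m0 m1 k \<psi> \<in> kerH st L W m0 m1 k" using Pn_spec by blast
lemma Pn_orth: "\<eta> \<in> kerH st L W m0 m1 k \<Longrightarrow> inner_n st L k \<eta> (\<lambda>c. \<psi> c - Pn st L W m0 m1 k \<psi> c) = 0"
  using Pn_spec by blast

lemma Pn_eq: "\<phi> \<in> kerH st L W m0 m1 k \<Longrightarrow> (\<forall>\<eta>\<in>kerH st L W m0 m1 k. inner_n st L k \<eta> (\<lambda>c. \<psi> c - \<phi> c) = 0)
   \<Longrightarrow> Pn st L W m0 m1 k \<psi> = \<phi>"
  using Pn_uniq Pn_spec by blast

lemma lin_Pn: "lin (Pn st L W m0 m1 k)"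
  unfolding lin_def
proof (intro conjI allI)
  fix x y :: state
  let ?P = "Pn st L W m0 m1 k"
  show "?P (\<lambda>c. x c + y c) = (\<lambda>c. ?P x c + ?P y c)"
  proof (rule Pn_eq)
    show "(\<lambda>c. ?P x c + ?P y c) \<in> kerH st L W m0 m1 k" by (intro ker_add Pn_ker)
    show "\<forall>\<eta>\<in>kerH st L W m0 m1 k. inner_n st L k \<eta> (\<lambda>c. x c + y c - (?P x c + ?P y c)) = 0"
    proof
      fix \<eta> assume e: "\<eta> \<in> kerH st L W m0 m1 k"
      have "(\<lambda>c. x c + y c - (?P x c + ?P y c)) = (\<lambda>c. (x c - ?P x c) + (y c - ?P y c))" by (simp add: algebra_simps)
      thus "inner_n st L k \<eta> (\<lambda>c. x c + y c - (?P x c + ?P y c)) = 0" using Pn_orth[OF e] by (simp add: inner_add_right)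
    qed
  qed
next
  fix a and x :: state
  let ?P = "Pn st L W m0 m1 k"
  show "?P (\<lambda>c. a * x c) = (\<lambda>c. a * ?P x c)"
  proof (rule Pn_eq)
    show "(\<lambda>c. a * ?P x c) \<in> kerH st L W m0 m1 k" by (intro ker_scal Pn_ker)
    show "\<forall>\<eta>\<in>kerH st L W m0 m1 k. inner_n st L k \<eta> (\<lambda>c. a * x c - a * ?P x c) = 0"
    proof
      fix \<eta> assume e: "\<eta> \<in> kerH st L W m0 m1 k"
      have "(\<lambda>c. a * x c - a * ?P x c) = (\<lambda>c. a * (x c - ?P x c))" by (simp add: algebra_simps)
      thus "inner_n st L k \<eta> (\<lambda>c. a * x c - a * ?P x c) = 0" using Pn_orth[OF e] by (simp add: inner_scal_right)
    qed
  qed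
qed

lemma lin_Pn_perp: "lin (Pn_perp st L W m0 m1 k)"
proof -
  have "Pn_perp st L W m0 m1 k = (\<lambda>\<psi> c. \<psi> c - Pn st L W m0 m1 k \<psi> c)" unfolding Pn_perp_def by (simp add: fun_eq_iff)
  moreover have "lin (\<lambda>\<psi> c. \<psi> c - Pn st L W m0 m1 k \<psi> c)"
    using lin_Pn[of st L W m0 m1 k] unfolding lin_def by (simp add: algebra_simps)
  ultimately show ?thesis by simp
qed




lemma inner_sum_left: "inner_n st L k (\<lambda>c. \<Sum>j\<in>J. f j c) x = (\<Sum>j\<in>J. inner_n st L k (f j) x)"
  unfolding inner_n_def by (simp add: sum_distrib_right sum.swap[of _ J])

lemma Ham_sa:
  assumes selfadj: "\<forall>m\<in>{m0..m1}. \<forall>k \<phi> \<psi>. insec st L k \<phi> \<longrightarrow> insec st L k \<psi> \<longrightarrow>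
                   inner_n st L k \<phi> (Hm st L W m \<psi>) = inner_n st L k (Hm st L W m \<phi>) \<psi>"
    and "insec st L k \<phi>" "insec st L k \<psi>"
  shows "inner_n st L k \<phi> (Ham st L W m0 m1 \<psi>) = inner_n st L k (Ham st L W m0 m1 \<phi>) \<psi>"
proof -
  have "inner_n st L k \<phi> (Ham st L W m0 m1 \<psi>) = (\<Sum>m\<in>{m0..m1}. inner_n st L k \<phi> (Hm st L W m \<psi>))"
    unfolding Ham_def by (rule inner_sum_right)
  also have "\<dots> = (\<Sum>m\<in>{m0..m1}. inner_n st L k (Hm st L W m \<phi>) \<psi>)"
    using selfadj assms(2,3) by (intro sum.cong refl) blast
  also have "\<dots> = inner_n st L k (Ham st L W m0 m1 \<phi>) \<psi>"
    unfolding Ham_def by (rule inner_sum_left[symmetric])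
  finally show ?thesis .
qed

lemma Pn_orth0:
  assumes "\<forall>\<eta>\<in>kerH st L W m0 m1 k. inner_n st L k \<eta> \<psi> = 0"
  shows "Pn st L W m0 m1 k \<psi> = (\<lambda>c. 0)"
  by (rule Pn_eq[OF ker_zero]) (use assms in simp)

lemma inner_ker_H: "p \<in> kerH st L W m0 m1 k \<Longrightarrow> inner_n st L k y (Ham st L W m0 m1 p) = 0"
  unfolding inner_n_def kerH_def by simp

definition gapset where
  "gapset st L W m0 m1 k = {Re (inner_n st L k \<psi> (Ham st L W m0 m1 \<psi>)) | \<psi>.
      insec st L k \<psi> \<and> (\<forall>\<eta>\<in>kerH st L W m0 m1 k. inner_n st L k \<eta> \<psi> = 0) \<and> norm_n st L k \<psi> = 1}"

lemma gapH_eq: "gapH st L W m0 m1 k = Inf (gapset st L W m0 m1 k)"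
  unfolding gapH_def gapset_def ..

lemma normalize:
  assumes "insec st L k r" "\<forall>\<eta>\<in>kerH st L W m0 m1 k. inner_n st L k \<eta> r = 0" "norm_n st L k r \<noteq> 0"
  defines "u \<equiv> (\<lambda>c. complex_of_real (1 / norm_n st L k r) * r c)"
  shows "insec st L k u" "\<forall>\<eta>\<in>kerH st L W m0 m1 k. inner_n st L k \<eta> u = 0" "norm_n st L k u = 1"
proof -
  show "insec st L k u" unfolding u_def by (rule insec_scal[OF assms(1)])
  show "\<forall>\<eta>\<in>kerH st L W m0 m1 k. inner_n st L k \<eta> u = 0"
  proof
    fix \<eta> assume "\<eta> \<in> kerH st L W m0 m1 k"
    thus "inner_n st L k \<eta> u = 0" unfolding u_def inner_scal_right using assms(2) by simp
  qed
  have "0 \<le> norm_n st L k r" by (rule norm_nonneg)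
  thus "norm_n st L k u = 1" unfolding u_def norm_scal norm_of_real using assms(3) by simp
qed

lemma gapset_ne:
  assumes "insec st L k \<psi>" "\<psi> \<notin> kerH st L W m0 m1 k"
  shows "gapset st L W m0 m1 k \<noteq> {}"
proof -
  define r where "r = (\<lambda>c. \<psi> c - Pn st L W m0 m1 k \<psi> c)"
  have ir: "insec st L k r" unfolding r_def by (rule insec_diff[OF assms(1) ker_insec[OF Pn_ker]])
  have o: "\<forall>\<eta>\<in>kerH st L W m0 m1 k. inner_n st L k \<eta> r = 0" unfolding r_def using Pn_orth by blast
  have "norm_n st L k r \<noteq> 0"
  proof
    assume "norm_n st L k r = 0"
    hence "r = (\<lambda>c. 0)" using norm_zero_insec ir by blast
    hence "\<psi> = Pn st L W m0 m1 k \<psi>" unfolding r_def by (simp add: fun_eq_iff)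
    thus False using assms(2) Pn_ker by metis
  qed
  from normalize[OF ir o this] show ?thesis unfolding gapset_def by blast
qed

lemma gapset_lower:
  assumes pos: "\<forall>\<psi>. insec st L k \<psi> \<longrightarrow> 0 \<le> Re (inner_n st L k \<psi> (Ham st L W m0 m1 \<psi>))"
  shows "bdd_below (gapset st L W m0 m1 k)" "\<And>s. s \<in> gapset st L W m0 m1 k \<Longrightarrow> 0 \<le> s"
proof -
  show "\<And>s. s \<in> gapset st L W m0 m1 k \<Longrightarrow> 0 \<le> s" using pos unfolding gapset_def by auto
  thus "bdd_below (gapset st L W m0 m1 k)" by (meson bdd_below.I)
qed

lemma gap_nonneg:
  assumes pos: "\<forall>\<psi>. insec st L k \<psi> \<longrightarrow> 0 \<le> Re (inner_n st L k \<psi> (Ham st L W m0 m1 \<psi>))"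
    and "insec st L k \<psi>" "\<psi> \<notin> kerH st L W m0 m1 k"
  shows "0 \<le> gapH st L W m0 m1 k"
  unfolding gapH_eq by (rule cInf_greatest[OF gapset_ne[OF assms(2,3)] gapset_lower(2)[OF pos]])

lemma key:
  assumes selfadj: "\<forall>m\<in>{m0..m1}. \<forall>k \<phi> \<psi>. insec st L k \<phi> \<longrightarrow> insec st L k \<psi> \<longrightarrow>
                   inner_n st L k \<phi> (Hm st L W m \<psi>) = inner_n st L k (Hm st L W m \<phi>) \<psi>"
    and pos: "\<forall>\<psi>. insec st L k \<psi> \<longrightarrow> 0 \<le> Re (inner_n st L k \<psi> (Ham st L W m0 m1 \<psi>))"
    and x: "insec st L k x"
  shows "gapH st L W m0 m1 k * (norm_n st L k (\<lambda>c. x c - Pn st L W m0 m1 k x c))\<^sup>2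
     \<le> Re (inner_n st L k x (Ham st L W m0 m1 x))"
proof -
  let ?H = "Ham st L W m0 m1"
  define p where "p = Pn st L W m0 m1 k x"
  define r where "r = (\<lambda>c. x c - p c)"
  have pK: "p \<in> kerH st L W m0 m1 k" unfolding p_def by (rule Pn_ker)
  have ip: "insec st L k p" by (rule ker_insec[OF pK])
  have ir: "insec st L k r" unfolding r_def by (rule insec_diff[OF x ip])
  have o: "\<forall>\<eta>\<in>kerH st L W m0 m1 k. inner_n st L k \<eta> r = 0" unfolding r_def p_def using Pn_orth by blast
  have xe: "x = (\<lambda>c. p c + r c)" unfolding r_def by simp
  have Hx: "?H x = (\<lambda>c. ?H p c + ?H r c)" by (subst xe) (rule linD(1)[OF lin_Ham])
  have "inner_n st L k x (?H x) = inner_n st L k p (?H p) + inner_n st L k p (?H r) + (inner_n st L k r (?H p) + inner_n st L k r (?H r))"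
    by (subst (1) xe, subst Hx) (simp add: inner_add_left inner_add_right)
  also have "\<dots> = inner_n st L k r (?H r)"
  proof -
    have "inner_n st L k p (?H r) = inner_n st L k (?H p) r" by (rule Ham_sa[OF selfadj ip ir])
    also have "\<dots> = cnj (inner_n st L k r (?H p))" by (rule inner_cnj)
    finally show ?thesis using inner_ker_H[OF pK] by simp
  qed
  finally have e1: "inner_n st L k x (?H x) = inner_n st L k r (?H r)" .
  show ?thesis
  proof (cases "norm_n st L k r = 0")
    case True
    hence "r = (\<lambda>c. 0)" using norm_zero_insec ir by blast
    hence "inner_n st L k r (?H r) = 0" by (simp add: inner_zero_left)
    thus ?thesis using e1 True unfolding r_def p_def by simp
  next
    case False
    define a where "a = 1 / norm_n st L k r"
    define u where "u = (\<lambda>c. complex_of_real a * r c)"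
    have u: "insec st L k u" "\<forall>\<eta>\<in>kerH st L W m0 m1 k. inner_n st L k \<eta> u = 0" "norm_n st L k u = 1"
      using normalize[OF ir o False] unfolding u_def a_def by auto
    hence "Re (inner_n st L k u (?H u)) \<in> gapset st L W m0 m1 k" unfolding gapset_def by blast
    hence g: "gapH st L W m0 m1 k \<le> Re (inner_n st L k u (?H u))"
      unfolding gapH_eq by (rule cInf_lower[OF _ gapset_lower(1)[OF pos]])
    have "?H u = (\<lambda>c. complex_of_real a * ?H r c)" unfolding u_def by (rule linD(2)[OF lin_Ham])
    hence "inner_n st L k u (?H u) = complex_of_real (a * a) * inner_n st L k r (?H r)"
      unfolding u_def by (simp add: inner_scal_left inner_scal_right)
    hence "Re (inner_n st L k u (?H u)) = a * a * Re (inner_n st L k r (?H r))" by simp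
    with g have "gapH st L W m0 m1 k \<le> a * a * Re (inner_n st L k r (?H r))" by simp
    hence "gapH st L W m0 m1 k * (norm_n st L k r)\<^sup>2 \<le> a * a * Re (inner_n st L k r (?H r)) * (norm_n st L k r)\<^sup>2"
      by (simp add: mult_right_mono)
    also have "\<dots> = Re (inner_n st L k r (?H r))" unfolding a_def using False by (simp add: power2_eq_square)
    finally show ?thesis using e1 unfolding r_def p_def by simp
  qed
qed

lemma perp_norm:
  "(norm_n st L k (\<lambda>c. x c - Pn st L W m0 m1 k x c))\<^sup>2 = Re (inner_n st L k x x) - Re (inner_n st L k x (Pn st L W m0 m1 k x))"
proof -
  define p where "p = Pn st L W m0 m1 k x"
  define r where "r = (\<lambda>c. x c - p c)"
  have pK: "p \<in> kerH st L W m0 m1 k" unfolding p_def by (rule Pn_ker)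
  have o: "inner_n st L k p r = 0" unfolding r_def p_def using Pn_orth pK p_def by blast
  have "inner_n st L k r r = inner_n st L k r x - inner_n st L k r p" unfolding r_def[of] by (simp add: r_def inner_diff_right)
  also have "inner_n st L k r p = 0" using o inner_cnj[of st L k r p] by simp
  also have "inner_n st L k r x = inner_n st L k x x - inner_n st L k p x" unfolding r_def by (rule inner_diff_left)
  also have "inner_n st L k p x = cnj (inner_n st L k x p)" by (rule inner_cnj)
  finally have "inner_n st L k r r = inner_n st L k x x - cnj (inner_n st L k x p)" by simp
  hence "Re (inner_n st L k r r) = Re (inner_n st L k x x) - Re (inner_n st L k x p)" by simp
  thus ?thesis using inner_self[of st L k r] unfolding r_def p_def by simp
qed

lemma lin_sum_app:
  assumes "finite B" "lin T"
  shows "T (\<lambda>c. \<Sum>b\<in>B. f b * g b c) = (\<lambda>c. \<Sum>b\<in>B. f b * T (g b) c)"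
  using assms(1)
proof (induction B rule: finite_induct)
  case empty thus ?case using lin_zero[OF assms(2)] by simp
next
  case (insert b B)
  have "T (\<lambda>c. \<Sum>b\<in>insert b B. f b * g b c) = T (\<lambda>c. f b * g b c + (\<Sum>b\<in>B. f b * g b c))"
    using insert by simp
  also have "\<dots> = (\<lambda>c. T (\<lambda>c. f b * g b c) c + T (\<lambda>c. \<Sum>b\<in>B. f b * g b c) c)" by (rule linD(1)[OF assms(2)])
  also have "\<dots> = (\<lambda>c. f b * T (g b) c + (\<Sum>b\<in>B. f b * T (g b) c))"
    unfolding insert.IH linD(2)[OF assms(2)] by simp
  also have "\<dots> = (\<lambda>c. \<Sum>b\<in>insert b B. f b * T (g b) c)" using insert by simp
  finally show ?case .
qed

lemma lin_bdd:
  assumes "lin T"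
  shows "bdd_above {norm_n st L k (T \<psi>) | \<psi>. insec st L k \<psi> \<and> norm_n st L k \<psi> \<le> 1}"
proof -
  define B where "B = cfgs st L k"
  define \<delta> where "\<delta> = (\<lambda>b::cfg. \<lambda>c. if c = b then (1::complex) else 0)"
  define G where "G = (\<lambda>c. \<Sum>b\<in>B. cmod (T (\<delta> b) c))"
  have fB: "finite B" unfolding B_def by (rule finite_cfgs)
  have "norm_n st L k (T \<psi>) \<le> sqrt (\<Sum>c\<in>B. (G c)\<^sup>2)" if \<psi>: "insec st L k \<psi>" "norm_n st L k \<psi> \<le> 1" for \<psi>
  proof -
    have dec: "\<psi> = (\<lambda>c. \<Sum>b\<in>B. \<psi> b * \<delta> b c)"
    proof
      fix c show "\<psi> c = (\<Sum>b\<in>B. \<psi> b * \<delta> b c)"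
      proof (cases "c \<in> B")
        case True thus ?thesis unfolding \<delta>_def using fB by (simp add: if_distrib cong: if_cong)
      next
        case False
        hence "\<psi> c = 0" using \<psi>(1) unfolding insec_def B_def by blast
        moreover have "(\<Sum>b\<in>B. \<psi> b * \<delta> b c) = 0" unfolding \<delta>_def using False by (intro sum.neutral) auto
        ultimately show ?thesis by simp
      qed
    qed
    have Tpsi: "T \<psi> = (\<lambda>c. \<Sum>b\<in>B. \<psi> b * T (\<delta> b) c)" by (subst dec) (rule lin_sum_app[OF fB assms])
    have pb: "cmod (\<psi> b) \<le> 1" if "b \<in> B" for b
    proof -
      have "(cmod (\<psi> b))\<^sup>2 \<le> (\<Sum>c\<in>B. (cmod (\<psi> c))\<^sup>2)" by (rule member_le_sum[OF that]) (auto simp: fB)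
      also have "\<dots> = (norm_n st L k \<psi>)\<^sup>2" unfolding B_def by (simp add: norm_sq)
      also have "\<dots> \<le> 1" using \<psi>(2) norm_nonneg[of st L k \<psi>] by (simp add: power_le_one)
      finally show ?thesis by (simp add: power_le_one_iff)
    qed
    have "cmod (T \<psi> c) \<le> G c" for c
    proof -
      have "cmod (T \<psi> c) \<le> (\<Sum>b\<in>B. cmod (\<psi> b * T (\<delta> b) c))" unfolding Tpsi by (rule norm_sum)
      also have "\<dots> \<le> G c" unfolding G_def norm_mult
        by (intro sum_mono) (use pb in \<open>auto intro: mult_left_le_one_le\<close>)
      finally show ?thesis .
    qed
    hence "(\<Sum>c\<in>B. (cmod (T \<psi> c))\<^sup>2) \<le> (\<Sum>c\<in>B. (G c)\<^sup>2)" by (intro sum_mono power_mono) auto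
    thus ?thesis unfolding norm_n_def B_def by simp
  qed
  thus ?thesis by (intro bdd_aboveI[where M = "sqrt (\<Sum>c\<in>B. (G c)\<^sup>2)"]) auto
qed

lemma re_inner_le: "Re (inner_n st L k x y) \<le> norm_n st L k x * norm_n st L k y"
proof -
  have "Re (inner_n st L k x y) \<le> cmod (inner_n st L k x y)" by (rule complex_Re_le_cmod)
  also have "\<dots> \<le> (\<Sum>c\<in>cfgs st L k. cmod (cnj (x c) * y c))" unfolding inner_n_def by (rule norm_sum)
  also have "\<dots> = (\<Sum>c\<in>cfgs st L k. \<bar>cmod (x c)\<bar> * \<bar>cmod (y c)\<bar>)" by (simp add: norm_mult)
  also have "\<dots> \<le> L2_set (\<lambda>c. cmod (x c)) (cfgs st L k) * L2_set (\<lambda>c. cmod (y c)) (cfgs st L k)"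
    by (rule L2_set_mult_ineq)
  also have "\<dots> = norm_n st L k x * norm_n st L k y" unfolding L2_set_def norm_n_def ..
  finally show ?thesis .
qed




theorem lemma1:
  fixes st :: stat and L m0 m1 n :: nat
    and W :: "nat \<Rightarrow> nat list \<Rightarrow> nat list \<Rightarrow> complex"
  assumes "m0 \<le> m1"
    and selfadj: "\<forall>m\<in>{m0..m1}. \<forall>k \<phi> \<psi>. insec st L k \<phi> \<longrightarrow> insec st L k \<psi> \<longrightarrow>
                   inner_n st L k \<phi> (Hm st L W m \<psi>) = inner_n st L k (Hm st L W m \<phi>) \<psi>"
    and "m1 \<le> n"
    and pos: "\<forall>\<psi>. insec st L n \<psi> \<longrightarrow> 0 \<le> Re (inner_n st L n \<psi> (Ham st L W m0 m1 \<psi>))"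
    and hyp: "\<forall>\<psi>. insec st L (n+1) \<psi> \<longrightarrow>
              Re (inner_n st L (n+1) \<psi> (Ham st L W m0 m1 \<psi>)) \<ge>
              1 / real (n + 1 - m0) * Re (inner_n st L (n+1) \<psi>
                 (\<lambda>c. \<Sum>j\<in>{1..L}. adag st L j (Ham st L W m0 m1 (ann st L j \<psi>)) c))"
    and nondeg_n: "\<exists>\<psi>. insec st L n \<psi> \<and> \<psi> \<notin> kerH st L W m0 m1 n"
    and nondeg_n1: "\<exists>\<psi>. insec st L (n+1) \<psi> \<and> \<psi> \<notin> kerH st L W m0 m1 (n+1)"
  shows "gapH st L W m0 m1 (n+1) \<ge>
    (real (n+1) - opnorm_n st L (n+1)
        (\<lambda>\<psi>. Pn_perp st L W m0 m1 (n+1)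
           (\<lambda>c. \<Sum>j\<in>{1..L}. adag st L j (Pn st L W m0 m1 n (ann st L j (Pn_perp st L W m0 m1 (n+1) \<psi>))) c)))
    / real (n + 1 - m0) * gapH st L W m0 m1 n"
proof -
  let ?H = "Ham st L W m0 m1"
  let ?K1 = "kerH st L W m0 m1 (Suc n)"
  let ?P = "Pn st L W m0 m1 n"
  let ?P1 = "Pn st L W m0 m1 (Suc n)"
  define X where "X = (\<lambda>\<psi>. Pn_perp st L W m0 m1 (Suc n)
           (\<lambda>c. \<Sum>j\<in>{1..L}. adag st L j (?P (ann st L j (Pn_perp st L W m0 m1 (Suc n) \<psi>))) c))"
  define op where "op = opnorm_n st L (Suc n) X"
  define g where "g = gapH st L W m0 m1 n"
  define D where "D = real (n + 1 - m0)"
  have Dpos: "0 < D" unfolding D_def using assms(1,3) by simp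
  have g0: "0 \<le> g" unfolding g_def using nondeg_n gap_nonneg[OF pos] by blast
  have linX: "lin X"
  proof -
    have l1: "lin (\<lambda>\<psi>. ann st L j (Pn_perp st L W m0 m1 (Suc n) \<psi>))" for j by (rule lin_comp[OF lin_ann lin_Pn_perp])
    have l2: "lin (\<lambda>\<psi>. ?P (ann st L j (Pn_perp st L W m0 m1 (Suc n) \<psi>)))" for j by (rule lin_comp[OF lin_Pn l1])
    have l3: "lin (\<lambda>\<psi>. adag st L j (?P (ann st L j (Pn_perp st L W m0 m1 (Suc n) \<psi>))))" for j by (rule lin_comp[OF lin_adag l2])
    have l4: "lin (\<lambda>\<psi> c. \<Sum>j\<in>{1..L}. adag st L j (?P (ann st L j (Pn_perp st L W m0 m1 (Suc n) \<psi>))) c)" by (rule lin_sum[OF l3])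
    show ?thesis unfolding X_def by (rule lin_comp[OF lin_Pn_perp l4])
  qed
  have bound: "R \<le> s" if s: "s \<in> gapset st L W m0 m1 (Suc n)" and R: "R = (real (n+1) - op) / D * g" for s R
  proof -
    obtain \<psi> where s\<psi>: "s = Re (inner_n st L (Suc n) \<psi> (?H \<psi>))" and i\<psi>: "insec st L (Suc n) \<psi>"
      and o\<psi>: "\<forall>\<eta>\<in>?K1. inner_n st L (Suc n) \<eta> \<psi> = 0" and n\<psi>: "norm_n st L (Suc n) \<psi> = 1"
      using s unfolding gapset_def by blast
    define x where "x = (\<lambda>j. ann st L j \<psi>)"
    have ix: "insec st L n (x j)" for j unfolding x_def by (rule insec_ann[OF i\<psi>])
    have h: "Re (inner_n st L (Suc n) \<psi> (?H \<psi>)) \<ge> 1 / D * Re (inner_n st L (Suc n) \<psi> (\<lambda>c. \<Sum>j\<in>{1..L}. adag st L j (?H (ann st L j \<psi>)) c))"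
      using hyp i\<psi> unfolding D_def by simp
    have a: "inner_n st L (Suc n) \<psi> (\<lambda>c. \<Sum>j\<in>{1..L}. adag st L j (?H (ann st L j \<psi>)) c) = (\<Sum>j\<in>{1..L}. inner_n st L n (x j) (?H (x j)))"
      unfolding inner_sum_right adj x_def ..
    have b: "(\<Sum>j\<in>{1..L}. g * (norm_n st L n (\<lambda>c. x j c - ?P (x j) c))\<^sup>2) \<le> (\<Sum>j\<in>{1..L}. Re (inner_n st L n (x j) (?H (x j))))"
      unfolding g_def by (intro sum_mono key[OF selfadj pos ix])
    have n1: "(\<Sum>j\<in>{1..L}. Re (inner_n st L n (x j) (x j))) = real (Suc n)"
    proof -
      have "(\<Sum>j\<in>{1..L}. inner_n st L n (x j) (x j)) = of_nat (Suc n) * inner_n st L (Suc n) \<psi> \<psi>"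
        unfolding x_def by (rule num_sum[OF i\<psi>])
      also have "\<dots> = of_nat (Suc n)" using inner_self[of st L "Suc n" \<psi>] n\<psi> by simp
      finally have "Re (\<Sum>j\<in>{1..L}. inner_n st L n (x j) (x j)) = real (Suc n)" by simp
      thus ?thesis by simp
    qed
    define Y where "Y = (\<lambda>c. \<Sum>j\<in>{1..L}. adag st L j (?P (ann st L j \<psi>)) c)"
    have d: "(\<Sum>j\<in>{1..L}. inner_n st L n (x j) (?P (x j))) = inner_n st L (Suc n) \<psi> Y"
      unfolding Y_def inner_sum_right adj x_def ..
    have pp: "Pn_perp st L W m0 m1 (Suc n) \<psi> = \<psi>"
      unfolding Pn_perp_def using Pn_orth0[OF o\<psi>] by simp
    have pp2: "(\<lambda>c. \<psi> c - ?P1 \<psi> c) = \<psi>" using pp unfolding Pn_perp_def .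
    have XY: "X \<psi> = (\<lambda>c. Y c - ?P1 Y c)" unfolding X_def Pn_perp_def pp2 Y_def ..
    have "inner_n st L (Suc n) \<psi> (X \<psi>) = inner_n st L (Suc n) \<psi> Y - inner_n st L (Suc n) \<psi> (?P1 Y)"
      unfolding XY by (rule inner_diff_right)
    also have "inner_n st L (Suc n) \<psi> (?P1 Y) = 0"
      using inner_cnj[of st L "Suc n" \<psi> "?P1 Y"] o\<psi> Pn_ker[of st L W m0 m1 "Suc n" Y] by simp
    finally have e: "inner_n st L (Suc n) \<psi> (X \<psi>) = inner_n st L (Suc n) \<psi> Y" by simp
    have "Re (inner_n st L (Suc n) \<psi> (X \<psi>)) \<le> norm_n st L (Suc n) (X \<psi>)"
      using re_inner_le[of st L "Suc n" \<psi> "X \<psi>"] n\<psi> by simp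
    also have "\<dots> \<le> op" unfolding op_def opnorm_n_def
      by (rule cSup_upper[OF _ lin_bdd[OF linX]]) (use i\<psi> n\<psi> in auto)
    finally have f: "Re (inner_n st L (Suc n) \<psi> Y) \<le> op" using e by simp
    have c: "(\<Sum>j\<in>{1..L}. (norm_n st L n (\<lambda>c. x j c - ?P (x j) c))\<^sup>2) = real (Suc n) - Re (inner_n st L (Suc n) \<psi> Y)"
    proof -
      have "(\<Sum>j\<in>{1..L}. (norm_n st L n (\<lambda>c. x j c - ?P (x j) c))\<^sup>2)
          = (\<Sum>j\<in>{1..L}. Re (inner_n st L n (x j) (x j))) - (\<Sum>j\<in>{1..L}. Re (inner_n st L n (x j) (?P (x j))))"
        unfolding perp_norm sum_subtractf ..
      also have "(\<Sum>j\<in>{1..L}. Re (inner_n st L n (x j) (?P (x j)))) = Re (inner_n st L (Suc n) \<psi> Y)"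
        unfolding d[symmetric] by simp
      finally show ?thesis unfolding n1 .
    qed
    have "R = 1 / D * (g * (real (Suc n) - op))" unfolding R by simp
    also have "\<dots> \<le> 1 / D * (g * (real (Suc n) - Re (inner_n st L (Suc n) \<psi> Y)))"
    proof -
      have "g * (real (Suc n) - op) \<le> g * (real (Suc n) - Re (inner_n st L (Suc n) \<psi> Y))"
        by (rule mult_left_mono) (use f g0 in simp_all)
      thus ?thesis by (rule mult_left_mono) (use Dpos in simp)
    qed
    also have "\<dots> = 1 / D * (\<Sum>j\<in>{1..L}. g * (norm_n st L n (\<lambda>c. x j c - ?P (x j) c))\<^sup>2)"
      unfolding sum_distrib_left[symmetric] c ..
    also have "\<dots> \<le> 1 / D * (\<Sum>j\<in>{1..L}. Re (inner_n st L n (x j) (?H (x j))))"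
      by (rule mult_left_mono[OF b]) (use Dpos in simp)
    also have "\<dots> = 1 / D * Re (inner_n st L (Suc n) \<psi> (\<lambda>c. \<Sum>j\<in>{1..L}. adag st L j (?H (ann st L j \<psi>)) c))"
      unfolding a by simp
    also have "\<dots> \<le> s" using h s\<psi> by simp
    finally show ?thesis .
  qed
  have "(real (n+1) - op) / D * g \<le> Inf (gapset st L W m0 m1 (Suc n))"
    by (rule cInf_greatest) (use gapset_ne nondeg_n1 bound in auto)
  thus ?thesis unfolding gapH_eq op_def X_def g_def D_def by simp
qed


end
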